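(* Let $G$ be a graph, let $\mathcal P$ be a set of pairwise distinguishable $(k+1)$-profiles of $G$ with $k=\kappa(\mathcal P,G)$, and let $(A_1,A_2),(B_1,B_2)\in\mathcal R(k,\mathcal P)$. Then there are two opposite corner separations of $(A_1,A_2)$ and $(B_1,B_2)$ that both lie in $\mathcal R(k,\mathcal P)$.
   Context: A separation of $G$ is an ordered pair $(A,B)$ of subsets of $V(G)$ with $A\cup B=V(G)$ and no edge between $A\setminus B$ and $B\setminus A$; its order is $|A\cap B|$. $(A,B)\le(C,D)$ means $A\subseteq C$, $D\subseteq B$. A profile is a set $P$ of separations with (P1) if $(C,D)\le(A,B)\in P$ then $(D,C)\notin P$, and (P2) if $(A,B),(C,D)\in P$ then $(B\cap D,A\cup C)\notin P$. For $\ell\in\mathbb N$, $P$ is an $\ell$-profile if all its separations have order $<\ell$ and for each separation $(A,B)$ of order $<\ell$, $(A,B)\in P$ or $(B,A)\in P$. A separation $(A,B)$ distinguishes profiles $P,P'$ if $(A,B)\in P,(B,A)\in P'$ or vice versa. $\kappa(\mathcal P,G)$ is the minimum order of a separation distinguishing two profiles of $\mathcal P$. $\mathcal R(k,\mathcal P)$ is the set of separations of finite order at most $k$ distinguishing two profiles of $\mathcal P$. For $\{E,E'\}=\{A_1,A_2\}$, $\{F,F'\}=\{B_1,B_2\}$ the corner separation of $E\cap F$ is $(E\cap F,E'\cup F')$; the corner separations $(E\cap F,E'\cup F')$ and $(E\cup F,E'\cap F')$ are called opposite. *)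

theory Defs
  imports Main
begin

text \<open>A graph is given by a vertex set V and a symmetric edge relation E \<subseteq> V \<times> V.
  Separations are pairs of vertex sets; the order |A \<inter> B| is only meaningful when finite.\<close>

definition is_graph :: "'a set \<Rightarrow> ('a \<times> 'a) set \<Rightarrow> bool" where
  "is_graph V E \<longleftrightarrow> E \<subseteq> V \<times> V \<and> sym E"

definition separation :: "'a set \<Rightarrow> ('a \<times> 'a) set \<Rightarrow> 'a set \<times> 'a set \<Rightarrow> bool" where
  "separation V E S \<longleftrightarrow> (case S of (A, B) \<Rightarrow>
     A \<union> B = V \<and>
     (\<forall>x y. (x, y) \<in> E \<longrightarrow> \<not> (x \<in> A - B \<and> y \<in> B - A) \<and> \<not> (x \<in> B - A \<and> y \<in> A - B)))"

definition sep_le :: "'a set \<times> 'a set \<Rightarrow> 'a set \<times> 'a set \<Rightarrow> bool" where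
  "sep_le S T \<longleftrightarrow> fst S \<subseteq> fst T \<and> snd T \<subseteq> snd S"

definition inv_sep :: "'a set \<times> 'a set \<Rightarrow> 'a set \<times> 'a set" where
  "inv_sep S = (snd S, fst S)"

definition order_less :: "'a set \<times> 'a set \<Rightarrow> nat \<Rightarrow> bool" where
  "order_less S l \<longleftrightarrow> finite (fst S \<inter> snd S) \<and> card (fst S \<inter> snd S) < l"

definition order_le :: "'a set \<times> 'a set \<Rightarrow> nat \<Rightarrow> bool" where
  "order_le S k \<longleftrightarrow> finite (fst S \<inter> snd S) \<and> card (fst S \<inter> snd S) \<le> k"

definition is_profile :: "('a set \<times> 'a set) set \<Rightarrow> bool" where
  "is_profile P \<longleftrightarrow>
     (\<forall>A B C D. sep_le (C, D) (A, B) \<and> (A, B) \<in> P \<longrightarrow> (D, C) \<notin> P) \<and>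
     (\<forall>A B C D. (A, B) \<in> P \<and> (C, D) \<in> P \<longrightarrow> (B \<inter> D, A \<union> C) \<notin> P)"

definition is_l_profile :: "'a set \<Rightarrow> ('a \<times> 'a) set \<Rightarrow> nat \<Rightarrow> ('a set \<times> 'a set) set \<Rightarrow> bool" where
  "is_l_profile V E l P \<longleftrightarrow> is_profile P \<and>
     (\<forall>S\<in>P. separation V E S \<and> order_less S l) \<and>
     (\<forall>S. separation V E S \<and> order_less S l \<longrightarrow> S \<in> P \<or> inv_sep S \<in> P)"

definition distinguishes :: "'a set \<times> 'a set \<Rightarrow> ('a set \<times> 'a set) set \<Rightarrow> ('a set \<times> 'a set) set \<Rightarrow> bool" where
  "distinguishes S P P' \<longleftrightarrow> (S \<in> P \<and> inv_sep S \<in> P') \<or> (inv_sep S \<in> P \<and> S \<in> P')"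

definition pairwise_distinguishable :: "'a set \<Rightarrow> ('a \<times> 'a) set \<Rightarrow> ('a set \<times> 'a set) set set \<Rightarrow> bool" where
  "pairwise_distinguishable V E \<P> \<longleftrightarrow>
     (\<forall>P\<in>\<P>. \<forall>P'\<in>\<P>. P \<noteq> P' \<longrightarrow> (\<exists>S. separation V E S \<and> distinguishes S P P'))"

definition kappa :: "'a set \<Rightarrow> ('a \<times> 'a) set \<Rightarrow> ('a set \<times> 'a set) set set \<Rightarrow> nat" where
  "kappa V E \<P> = (LEAST n. \<exists>S P P'. separation V E S \<and> P \<in> \<P> \<and> P' \<in> \<P> \<and>
      distinguishes S P P' \<and> finite (fst S \<inter> snd S) \<and> card (fst S \<inter> snd S) = n)"

definition R_set :: "'a set \<Rightarrow> ('a \<times> 'a) set \<Rightarrow> nat \<Rightarrow> ('a set \<times> 'a set) set set \<Rightarrow> ('a set \<times> 'a set) set" where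
  "R_set V E k \<P> = {S. separation V E S \<and> order_le S k \<and>
      (\<exists>P\<in>\<P>. \<exists>P'\<in>\<P>. distinguishes S P P')}"

end

theory Submission
  imports Defs
begin

lemma corner_sep:
  assumes "separation V E (a1, a2)" "separation V E (b1, b2)"
  shows "separation V E (a1 \<inter> b1, a2 \<union> b2)"
proof -
  have u: "a1 \<union> a2 = V" "b1 \<union> b2 = V" using assms by (auto simp: separation_def)
  have e1: "\<And>x y. (x, y) \<in> E \<Longrightarrow> \<not> (x \<in> a1 - a2 \<and> y \<in> a2 - a1) \<and> \<not> (x \<in> a2 - a1 \<and> y \<in> a1 - a2)"
    using assms(1) by (auto simp: separation_def)
  have e2: "\<And>x y. (x, y) \<in> E \<Longrightarrow> \<not> (x \<in> b1 - b2 \<and> y \<in> b2 - b1) \<and> \<not> (x \<in> b2 - b1 \<and> y \<in> b1 - b2)"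
    using assms(2) by (auto simp: separation_def)
  have "a1 \<inter> b1 \<union> (a2 \<union> b2) = V" using u by blast
  moreover have "\<forall>x y. (x, y) \<in> E \<longrightarrow> \<not> (x \<in> a1 \<inter> b1 - (a2 \<union> b2) \<and> y \<in> (a2 \<union> b2) - a1 \<inter> b1) \<and>
      \<not> (x \<in> (a2 \<union> b2) - a1 \<inter> b1 \<and> y \<in> a1 \<inter> b1 - (a2 \<union> b2))"
  proof (intro allI impI)
    fix x y assume "(x, y) \<in> E"
    from e1[OF this] e2[OF this] u
    show "\<not> (x \<in> a1 \<inter> b1 - (a2 \<union> b2) \<and> y \<in> (a2 \<union> b2) - a1 \<inter> b1) \<and>
      \<not> (x \<in> (a2 \<union> b2) - a1 \<inter> b1 \<and> y \<in> a1 \<inter> b1 - (a2 \<union> b2))" by blast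
  qed
  ultimately show ?thesis unfolding separation_def prod.case by (rule conjI)
qed

lemma inv_sep_sep: "separation V E S \<Longrightarrow> separation V E (inv_sep S)"
  unfolding separation_def inv_sep_def by (cases S) auto

lemma card_mod:
  assumes "finite (a1 \<inter> a2)" "finite (b1 \<inter> b2)" "a1 \<union> a2 = b1 \<union> b2"
  shows "card ((a1 \<inter> b1) \<inter> (a2 \<union> b2)) + card ((a2 \<inter> b2) \<inter> (a1 \<union> b1))
         = card (a1 \<inter> a2) + card (b1 \<inter> b2)"
proof -
  let ?X = "(a1 \<inter> b1) \<inter> (a2 \<union> b2)" and ?Y = "(a2 \<inter> b2) \<inter> (a1 \<union> b1)"
  have f: "finite ?X" "finite ?Y"
    by (rule finite_subset[of _ "(a1 \<inter> a2) \<union> (b1 \<inter> b2)"], auto simp: assms)+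
  have u: "?X \<union> ?Y = (a1 \<inter> a2) \<union> (b1 \<inter> b2)" using assms(3) by blast
  have i: "?X \<inter> ?Y = (a1 \<inter> a2) \<inter> (b1 \<inter> b2)" by blast
  have "card ?X + card ?Y = card (?X \<union> ?Y) + card (?X \<inter> ?Y)"
    using card_Un_Int[OF f] .
  also have "\<dots> = card (a1 \<inter> a2) + card (b1 \<inter> b2)"
    unfolding u i using card_Un_Int[OF assms(1,2)] by simp
  finally show ?thesis .
qed

lemma half:
  assumes lp: "is_l_profile V E (k + 1) P" "is_l_profile V E (k + 1) P2"
    and sa: "separation V E (a1, a2)" and sb: "separation V E (b1, b2)"
    and inP: "(a1, a2) \<in> P" "(b1, b2) \<in> P"
    and inP2: "(a2, a1) \<in> P2" "(b2, b1) \<in> P2"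
    and fin: "finite ((a1 \<inter> b1) \<inter> (a2 \<union> b2))"
    and c: "card ((a1 \<inter> b1) \<inter> (a2 \<union> b2)) \<le> k"
  shows "distinguishes (a1 \<inter> b1, a2 \<union> b2) P P2"
proof -
  have sx: "separation V E (a1 \<inter> b1, a2 \<union> b2)" using corner_sep[OF sa sb] .
  have ol: "order_less (a1 \<inter> b1, a2 \<union> b2) (k+1)" using fin c by (simp add: order_less_def)
  have o1: "(a1 \<inter> b1, a2 \<union> b2) \<in> P \<or> inv_sep (a1 \<inter> b1, a2 \<union> b2) \<in> P"
    using lp(1) sx ol unfolding is_l_profile_def by blast
  have o2: "(a1 \<inter> b1, a2 \<union> b2) \<in> P2 \<or> inv_sep (a1 \<inter> b1, a2 \<union> b2) \<in> P2"
    using lp(2) sx ol unfolding is_l_profile_def by blast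
  have "sep_le (a1 \<inter> b1, a2 \<union> b2) (a1, a2)" by (auto simp: sep_le_def)
  hence "(a2 \<union> b2, a1 \<inter> b1) \<notin> P" using lp(1) inP(1) unfolding is_l_profile_def is_profile_def by blast
  hence x1: "(a1 \<inter> b1, a2 \<union> b2) \<in> P" using o1 by (simp add: inv_sep_def)
  have "(a1 \<inter> b1, a2 \<union> b2) \<notin> P2" using lp(2) inP2 unfolding is_l_profile_def is_profile_def by blast
  hence "inv_sep (a1 \<inter> b1, a2 \<union> b2) \<in> P2" using o2 by blast
  thus ?thesis using x1 by (simp add: distinguishes_def)
qed

lemma kappa_le:
  assumes "separation V E S" "P \<in> \<P>" "P' \<in> \<P>" "distinguishes S P P'" "finite (fst S \<inter> snd S)"
  shows "kappa V E \<P> \<le> card (fst S \<inter> snd S)"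
  unfolding kappa_def by (rule Least_le) (use assms in blast)

lemma core:
  assumes G: "\<forall>P\<in>\<P>. is_l_profile V E (k + 1) P"
    and kk: "k = kappa V E \<P>"
    and ra: "(a1, a2) \<in> R_set V E k \<P>" and rb: "(b1, b2) \<in> R_set V E k \<P>"
    and PP: "P \<in> \<P>" "P2 \<in> \<P>"
    and inP: "(a1, a2) \<in> P" "(b1, b2) \<in> P"
    and inP2: "(a2, a1) \<in> P2" "(b2, b1) \<in> P2"
  shows "(a1 \<inter> b1, a2 \<union> b2) \<in> R_set V E k \<P> \<and> (a1 \<union> b1, a2 \<inter> b2) \<in> R_set V E k \<P>"
proof -
  have lp: "is_l_profile V E (k + 1) P" "is_l_profile V E (k + 1) P2" using G PP by auto
  have sa: "separation V E (a1, a2)" and sb: "separation V E (b1, b2)"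
    using ra rb by (auto simp: R_set_def)
  have fa: "finite (a1 \<inter> a2)" "card (a1 \<inter> a2) \<le> k" using ra by (auto simp: R_set_def order_le_def)
  have fb: "finite (b1 \<inter> b2)" "card (b1 \<inter> b2) \<le> k" using rb by (auto simp: R_set_def order_le_def)
  have ka: "k \<le> card (a1 \<inter> a2)"
  proof -
    obtain Q Q' where "Q \<in> \<P>" "Q' \<in> \<P>" "distinguishes (a1, a2) Q Q'" using ra by (auto simp: R_set_def)
    thus ?thesis using kappa_le[OF sa, of Q \<P> Q'] fa kk by auto
  qed
  have kb: "k \<le> card (b1 \<inter> b2)"
  proof -
    obtain Q Q' where "Q \<in> \<P>" "Q' \<in> \<P>" "distinguishes (b1, b2) Q Q'" using rb by (auto simp: R_set_def)
    thus ?thesis using kappa_le[OF sb, of Q \<P> Q'] fb kk by auto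
  qed
  have un: "a1 \<union> a2 = b1 \<union> b2" using sa sb by (simp add: separation_def)
  have fX: "finite ((a1 \<inter> b1) \<inter> (a2 \<union> b2))" and fY: "finite ((a2 \<inter> b2) \<inter> (a1 \<union> b1))"
    by (rule finite_subset[of _ "(a1 \<inter> a2) \<union> (b1 \<inter> b2)"], auto simp: fa fb)+
  have sum: "card ((a1 \<inter> b1) \<inter> (a2 \<union> b2)) + card ((a2 \<inter> b2) \<inter> (a1 \<union> b1)) = k + k"
    using card_mod[OF fa(1) fb(1) un] fa fb ka kb by simp
  have sX: "separation V E (a1 \<inter> b1, a2 \<union> b2)" using corner_sep[OF sa sb] .
  have sa': "separation V E (a2, a1)" and sb': "separation V E (b2, b1)"
    using sa sb by (auto simp: separation_def)
  have sY: "separation V E (a2 \<inter> b2, a1 \<union> b1)" using corner_sep[OF sa' sb'] .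
  have dX: "card ((a1 \<inter> b1) \<inter> (a2 \<union> b2)) \<le> k \<Longrightarrow> distinguishes (a1 \<inter> b1, a2 \<union> b2) P P2"
    by (rule half[OF lp sa sb inP inP2 fX])
  have dY: "card ((a2 \<inter> b2) \<inter> (a1 \<union> b1)) \<le> k \<Longrightarrow> distinguishes (a2 \<inter> b2, a1 \<union> b1) P2 P"
    by (rule half[OF lp(2,1) sa' sb' inP2 inP fY])
  have kX: "distinguishes (a1 \<inter> b1, a2 \<union> b2) P P2 \<Longrightarrow> k \<le> card ((a1 \<inter> b1) \<inter> (a2 \<union> b2))"
    using kappa_le[OF sX PP] fX kk by auto
  have kY: "distinguishes (a2 \<inter> b2, a1 \<union> b1) P2 P \<Longrightarrow> k \<le> card ((a2 \<inter> b2) \<inter> (a1 \<union> b1))"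
    using kappa_le[OF sY PP(2,1)] fY kk by auto
  have cX: "card ((a1 \<inter> b1) \<inter> (a2 \<union> b2)) = k" and cY: "card ((a2 \<inter> b2) \<inter> (a1 \<union> b1)) = k"
    using sum dX dY kX kY by (cases "card ((a1 \<inter> b1) \<inter> (a2 \<union> b2)) \<le> k"; force)+
  have DX: "distinguishes (a1 \<inter> b1, a2 \<union> b2) P P2" using dX cX by simp
  have DY: "distinguishes (a1 \<union> b1, a2 \<inter> b2) P P2"
    using dY cY by (auto simp: distinguishes_def inv_sep_def)
  have sY': "separation V E (a1 \<union> b1, a2 \<inter> b2)" using inv_sep_sep[OF sY] by (simp add: inv_sep_def)
  show ?thesis
    using DX DY sX sY' fX fY cX cY PP
    by (auto simp: R_set_def order_le_def Int_commute)
qed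

lemma R_sym: "(a, b) \<in> R_set V E k \<P> \<Longrightarrow> (b, a) \<in> R_set V E k \<P>"
  unfolding R_set_def separation_def order_le_def distinguishes_def inv_sep_def
  by (auto simp: Int_commute)

theorem lemma2p6:
  fixes V :: "'a set" and E :: "('a \<times> 'a) set"
    and \<P> :: "('a set \<times> 'a set) set set" and k :: nat
    and A1 A2 B1 B2 :: "'a set"
  assumes "is_graph V E"
    and "\<forall>P\<in>\<P>. is_l_profile V E (k + 1) P"
    and "pairwise_distinguishable V E \<P>"
    and "k = kappa V E \<P>"
    and "(A1, A2) \<in> R_set V E k \<P>"
    and "(B1, B2) \<in> R_set V E k \<P>"
  shows "\<exists>E1 E2 F1 F2. (E1, E2) \<in> {(A1, A2), (A2, A1)} \<and> (F1, F2) \<in> {(B1, B2), (B2, B1)} \<and>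
           (E1 \<inter> F1, E2 \<union> F2) \<in> R_set V E k \<P> \<and>
           (E1 \<union> F1, E2 \<inter> F2) \<in> R_set V E k \<P>"
proof -
  note G = assms(2) and kk = assms(4)
  have ra: "(A1, A2) \<in> R_set V E k \<P>" and rb: "(B1, B2) \<in> R_set V E k \<P>" using assms by auto
  have ra': "(A2, A1) \<in> R_set V E k \<P>" and rb': "(B2, B1) \<in> R_set V E k \<P>" using R_sym[OF ra] R_sym[OF rb] by auto
  obtain P P' where PP: "P \<in> \<P>" "P' \<in> \<P>" "(A1, A2) \<in> P" "(A2, A1) \<in> P'"
    using ra by (auto simp: R_set_def distinguishes_def inv_sep_def)
  obtain Q Q' where QQ: "Q \<in> \<P>" "Q' \<in> \<P>" "(B1, B2) \<in> Q" "(B2, B1) \<in> Q'"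
    using rb by (auto simp: R_set_def distinguishes_def inv_sep_def)
  have orient: "\<And>X Y R. R \<in> \<P> \<Longrightarrow> (X, Y) \<in> R_set V E k \<P> \<Longrightarrow> (X, Y) \<in> R \<or> (Y, X) \<in> R"
  proof -
    fix X Y R assume "R \<in> \<P>" "(X, Y) \<in> R_set V E k \<P>"
    hence lpR: "is_l_profile V E (k + 1) R" and s: "separation V E (X, Y)" and o: "order_le (X, Y) k"
      using G by (auto simp: R_set_def)
    have "order_less (X, Y) (k + 1)" using o by (simp add: order_le_def order_less_def)
    hence "(X, Y) \<in> R \<or> inv_sep (X, Y) \<in> R" using lpR s unfolding is_l_profile_def by blast
    thus "(X, Y) \<in> R \<or> (Y, X) \<in> R" by (simp add: inv_sep_def)
  qed
  have C11: "\<And>R1 R2. R1 \<in> \<P> \<Longrightarrow> R2 \<in> \<P> \<Longrightarrow> (A1, A2) \<in> R1 \<Longrightarrow> (B1, B2) \<in> R1 \<Longrightarrow>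
      (A2, A1) \<in> R2 \<Longrightarrow> (B2, B1) \<in> R2 \<Longrightarrow> ?thesis"
    subgoal premises p using core[OF G kk ra rb p] by blast .
  have C12: "\<And>R1 R2. R1 \<in> \<P> \<Longrightarrow> R2 \<in> \<P> \<Longrightarrow> (A1, A2) \<in> R1 \<Longrightarrow> (B2, B1) \<in> R1 \<Longrightarrow>
      (A2, A1) \<in> R2 \<Longrightarrow> (B1, B2) \<in> R2 \<Longrightarrow> ?thesis"
    subgoal premises p using core[OF G kk ra rb' p] by blast .
  show ?thesis
  proof (cases "(B1, B2) \<in> P")
    case b1: True
    show ?thesis
    proof (cases "(B2, B1) \<in> P'")
      case True thus ?thesis using C11[OF PP(1,2) PP(3) b1 PP(4)] by blast
    next
      case False
      hence b2: "(B1, B2) \<in> P'" using orient[OF PP(2) rb] by blast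
      show ?thesis
      proof (cases "(A1, A2) \<in> Q'")
        case True thus ?thesis using C12[OF QQ(2) PP(2) True QQ(4) PP(4) b2] by blast
      next
        case False
        hence "(A2, A1) \<in> Q'" using orient[OF QQ(2) ra] by blast
        thus ?thesis using C11[OF PP(1) QQ(2) PP(3) b1 _ QQ(4)] by blast
      qed
    qed
  next
    case False
    hence b1: "(B2, B1) \<in> P" using orient[OF PP(1) rb] by blast
    show ?thesis
    proof (cases "(B1, B2) \<in> P'")
      case True thus ?thesis using C12[OF PP(1,2) PP(3) b1 PP(4)] by blast
    next
      case False
      hence b2: "(B2, B1) \<in> P'" using orient[OF PP(2) rb] by blast
      show ?thesis
      proof (cases "(A1, A2) \<in> Q")
        case True thus ?thesis using C11[OF QQ(1) PP(2) True QQ(3) PP(4) b2] by blast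
      next
        case False
        hence "(A2, A1) \<in> Q" using orient[OF QQ(1) ra] by blast
        thus ?thesis using C12[OF PP(1) QQ(1) PP(3) b1 _ QQ(3)] by blast
      qed
    qed
  qed
qed

end
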